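(* Let $d\ge 2$ and let $f(t,s)=s^d+\sum_{i=1}^{d}\binom{x_i}{i}t^{i}s^{d-i}$, where $x_i\ge i-1$ are real numbers with $\binom{x_i}{i}>0$ for all $i$, and suppose $x_d\ge d$. If $f(t,s)$ is Lorentzian, then $x_1\ge x_2\ge\cdots\ge x_d$.
   Context: For real $x$ and integer $k\ge0$, $\binom{x}{k}=\frac{x(x-1)\cdots(x-k+1)}{k!}$. A homogeneous polynomial $p$ of degree $d\ge2$ in variables $z_1,\dots,z_n$ with nonnegative real coefficients is Lorentzian if its support (the set of exponent vectors of monomials with nonzero coefficient) is M-convex, and for every $\alpha\in\mathbb{Z}_{\ge0}^n$ with $|\alpha|=d-2$ the quadratic form $\partial^{\alpha}p$ has at most one positive eigenvalue. (For bivariate $p=\sum_{i=0}^d a_i t^i s^{d-i}$ with $a_i\ge0$, this is equivalent to the sequence $(a_i)$ having no internal zeros and satisfying $\big(a_i/\binom{d}{i}\big)^2\ge \frac{a_{i-1}}{\binom{d}{i-1}}\frac{a_{i+1}}{\binom{d}{i+1}}$ for $1\le i\le d-1$.) *)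

theory Defs
  imports "HOL-Analysis.Analysis" "HOL-Computational_Algebra.Polynomial"
begin

text \<open>A homogeneous bivariate form of degree d is represented by its coefficient
  sequence a, where a i is the coefficient of t^i s^(d-i), for i = 0..d.
  Exponent vectors are pairs (exponent of t, exponent of s).\<close>

definition support2 :: "nat \<Rightarrow> (nat \<Rightarrow> real) \<Rightarrow> (nat \<times> nat) set" where
  "support2 d a = {(i, d - i) | i. i \<le> d \<and> a i \<noteq> 0}"

text \<open>M-convexity of a set of exponent vectors in two variables (exchange axiom;
  with two variables the index j must be the other coordinate).\<close>
definition M_convex2 :: "(nat \<times> nat) set \<Rightarrow> bool" where
  "M_convex2 J \<longleftrightarrow> (\<forall>\<alpha>\<in>J. \<forall>\<beta>\<in>J.
      (fst \<alpha> > fst \<beta> \<longrightarrow> snd \<alpha> < snd \<beta> \<and> (fst \<alpha> - 1, snd \<alpha> + 1) \<in> J) \<and>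
      (snd \<alpha> > snd \<beta> \<longrightarrow> fst \<alpha> < fst \<beta> \<and> (fst \<alpha> + 1, snd \<alpha> - 1) \<in> J))"

text \<open>Falling factorial n(n-1)...(n-j+1), the constant from differentiating z^n j times.\<close>
definition falling :: "nat \<Rightarrow> nat \<Rightarrow> real" where
  "falling n j = (\<Prod>l<j. real (n - l))"

text \<open>Coefficient of t^i s^(d-i) in the (j,k)-th partial derivative (d/dt)^j (d/ds)^k p;
  the result has monomial t^(i-j) s^(d-i-k).\<close>
definition deriv_coeff :: "nat \<Rightarrow> (nat \<Rightarrow> real) \<Rightarrow> nat \<Rightarrow> nat \<Rightarrow> nat \<Rightarrow> real" where
  "deriv_coeff d a j k i = a i * falling i j * falling (d - i) k"

text \<open>The symmetric matrix of the quadratic form obtained as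
  (d/dt)^j (d/ds)^(d-2-j) p = A t^2 + B t s + C s^2, namely [[A, B/2], [B/2, C]].\<close>
definition quad_matrix :: "nat \<Rightarrow> (nat \<Rightarrow> real) \<Rightarrow> nat \<Rightarrow> real^2^2" where
  "quad_matrix d a j =
     (let k = d - 2 - j;
          A = deriv_coeff d a j k (j + 2);
          B = deriv_coeff d a j k (j + 1);
          C = deriv_coeff d a j k j
      in \<chi> r c. if r = 1 \<and> c = 1 then A else if r = 2 \<and> c = 2 then C else B / 2)"

definition charpoly2 :: "real^2^2 \<Rightarrow> real poly" where
  "charpoly2 M = [: M$1$1 * M$2$2 - M$1$2 * M$2$1, - (M$1$1 + M$2$2), 1 :]"

definition num_pos_eigenvalues2 :: "real^2^2 \<Rightarrow> nat" where
  "num_pos_eigenvalues2 M = (\<Sum>r\<in>{r. r > 0 \<and> poly (charpoly2 M) r = 0}. order r (charpoly2 M))"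

definition lorentzian2 :: "nat \<Rightarrow> (nat \<Rightarrow> real) \<Rightarrow> bool" where
  "lorentzian2 d a \<longleftrightarrow> 2 \<le> d \<and> (\<forall>i\<le>d. 0 \<le> a i) \<and> M_convex2 (support2 d a) \<and>
     (\<forall>j\<le>d - 2. num_pos_eigenvalues2 (quad_matrix d a j) \<le> 1)"

end

theory Submission
  imports Defs
begin

lemma eig_count:
  fixes M :: "real^2^2" and A B C :: real
  assumes "M$1$1 = A" "M$2$2 = C" "M$1$2 = B/2" "M$2$1 = B/2"
    and "A \<ge> 0" "C \<ge> 0" "4*A*C > B^2"
  shows "num_pos_eigenvalues2 M \<ge> 2"
proof -
  define D where "D = (A - C)^2 + B^2"
  define r1 where "r1 = (A + C + sqrt D)/2"
  define r2 where "r2 = (A + C - sqrt D)/2"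
  have D0: "D \<ge> 0" unfolding D_def by simp
  have sD: "sqrt D ^ 2 = D" using D0 by simp
  have AC: "A + C > 0" using assms(5-7)
    by (metis add_cancel_left_right less_eq_real_def mult_eq_0_iff mult_zero_left zero_le_power2 not_less power2_eq_square add_nonneg_pos)
  have "D < (A+C)^2" unfolding D_def using assms(7) by (simp add: power2_eq_square algebra_simps)
  hence "sqrt D < A + C" using AC D0
    by (metis abs_of_pos real_sqrt_abs real_sqrt_less_iff)
  hence r2p: "r2 > 0" unfolding r2_def by simp
  have r1p: "r1 > 0" unfolding r1_def using AC D0 by (simp add: add_pos_nonneg)
  have prod: "r1 * r2 = A*C - (B/2)*(B/2)"
  proof -
    have "r1 * r2 = ((A+C)^2 - (sqrt D)^2)/4" unfolding r1_def r2_def by (simp add: power2_eq_square algebra_simps)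
    also have "\<dots> = A*C - (B/2)*(B/2)" proof -
      have e: "(sqrt D)^2 = (A-C)^2 + B^2" using sD D_def by simp
      show ?thesis by (subst e) (simp add: field_simps power2_eq_square)
    qed
    finally show ?thesis .
  qed
  have sum: "r1 + r2 = A + C" unfolding r1_def r2_def by (simp add: field_simps)
  have cp: "charpoly2 M = [:-r1,1:] * [:-r2,1:]"
    unfolding charpoly2_def assms(1-4) using prod sum
    by (simp add: algebra_simps)
  have nz: "charpoly2 M \<noteq> 0" unfolding charpoly2_def by simp
  let ?S = "{r. r > 0 \<and> poly (charpoly2 M) r = 0}"
  have fin: "finite ?S" using poly_roots_finite[OF nz] by (rule rev_finite_subset) auto
  have o1: "order r1 (charpoly2 M) = order r1 [:-r1,1:] + order r1 [:-r2,1:]"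
    using nz cp order_mult by metis
  have o11: "order r1 [:-r1,1:] = 1" using order_power_n_n[of r1 1] by simp
  have o2: "order r2 (charpoly2 M) = order r2 [:-r1,1:] + order r2 [:-r2,1:]"
    using nz cp order_mult by metis
  have o22: "order r2 [:-r2,1:] = 1" using order_power_n_n[of r2 1] by simp
  have in1: "r1 \<in> ?S" using r1p cp by simp
  have in2: "r2 \<in> ?S" using r2p cp by simp
  show ?thesis
  proof (cases "r1 = r2")
    case True
    have "order r1 (charpoly2 M) = 2" using o1 o11 True by simp
    moreover have "order r1 (charpoly2 M) \<le> num_pos_eigenvalues2 M"
      unfolding num_pos_eigenvalues2_def
      using member_le_sum[OF in1 _ fin, of "\<lambda>r. order r (charpoly2 M)"] by simp
    ultimately show ?thesis by simp
  next
    case False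
    have "order r1 (charpoly2 M) + order r2 (charpoly2 M) = (\<Sum>r\<in>{r1,r2}. order r (charpoly2 M))"
      using False by simp
    also have "\<dots> \<le> num_pos_eigenvalues2 M"
      unfolding num_pos_eigenvalues2_def
      by (rule sum_mono2[OF fin]) (use in1 in2 in auto)
    finally show ?thesis using o1 o11 o2 o22 by simp
  qed
qed

lemma qm_entries:
  "quad_matrix d a j $1$1 = deriv_coeff d a j (d-2-j) (j+2)"
  "quad_matrix d a j $2$2 = deriv_coeff d a j (d-2-j) j"
  "quad_matrix d a j $1$2 = deriv_coeff d a j (d-2-j) (j+1) / 2"
  "quad_matrix d a j $2$1 = deriv_coeff d a j (d-2-j) (j+1) / 2"
  unfolding quad_matrix_def Let_def by simp_all

lemma falling_fact: "j \<le> n \<Longrightarrow> falling n j * fact (n - j) = (fact n :: real)"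
proof (induction j)
  case 0 then show ?case by (simp add: falling_def)
next
  case (Suc j)
  have f: "falling n (Suc j) = falling n j * real (n - j)" unfolding falling_def by simp
  have "n - j = Suc (n - Suc j)" using Suc.prems by simp
  hence g: "(fact (n - j) :: real) = real (n - j) * fact (n - Suc j)"
    by (metis fact_Suc of_nat_Suc)
  have "falling n (Suc j) * fact (n - Suc j) = falling n j * (real (n - j) * fact (n - Suc j))"
    unfolding f by (simp only: mult.assoc)
  also have "\<dots> = falling n j * fact (n - j)" by (simp only: g)
  also have "\<dots> = fact n" using Suc by simp
  finally show ?case .
qed

lemma falling_eq: "j \<le> n \<Longrightarrow> falling n j = (fact n :: real) / fact (n - j)"
  using falling_fact[of j n] by (simp add: field_simps)

lemma falling_nonneg: "falling n j \<ge> 0"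
  unfolding falling_def by (rule prod_nonneg) simp

lemma lc_from_lor:
  assumes L: "lorentzian2 d a" and jd: "j + 2 \<le> d"
  shows "(a j * fact j * fact (d-j)) * (a (j+2) * fact (j+2) * fact (d-(j+2))) \<le> (a (j+1) * fact (j+1) * fact (d-(j+1)))^2"
proof -
  obtain k where dk: "d = j + k + 2" using jd by (metis add.commute le_Suc_ex add.assoc)
  have num: "num_pos_eigenvalues2 (quad_matrix d a j) \<le> 1" using L jd unfolding lorentzian2_def by auto
  have nn: "\<forall>i\<le>d. 0 \<le> a i" using L unfolding lorentzian2_def by auto
  define A where "A = deriv_coeff d a j (d-2-j) (j+2)"
  define B where "B = deriv_coeff d a j (d-2-j) (j+1)"
  define C where "C = deriv_coeff d a j (d-2-j) j"
  have A0: "A \<ge> 0" unfolding A_def deriv_coeff_def using nn jd falling_nonneg by simp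
  have C0: "C \<ge> 0" unfolding C_def deriv_coeff_def using nn jd falling_nonneg by simp
  have "\<not> 4*A*C > B^2"
  proof
    assume "4*A*C > B^2"
    hence "num_pos_eigenvalues2 (quad_matrix d a j) \<ge> 2"
      using eig_count[OF qm_entries(1,2,3,4)[of d a j] _ _] A0 C0 unfolding A_def B_def C_def by blast
    thus False using num by simp
  qed
  hence le: "4*A*C \<le> B^2" by simp
  have k1: "d - 2 - j = k" "d - (j+2) = k" "d - (j+1) = k + 1" "d - j = k + 2" using dk by auto
  have fA: "falling (j+2) j = fact (j+2) / 2" using falling_eq[of j "j+2"] by simp
  have fB: "falling (j+1) j = fact (j+1)" using falling_eq[of j "j+1"] by simp
  have fC: "falling j j = fact j" using falling_eq[of j j] by simp
  have gA: "falling k k = fact k" using falling_eq[of k k] by simp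
  have gB: "falling (k+1) k = fact (k+1)" using falling_eq[of k "k+1"] by simp
  have gC: "falling (k+2) k = fact (k+2) / 2" using falling_eq[of k "k+2"] by simp
  have alg: "\<And>p1 p2 p3 p4 p5 p6::real. 4 * (p1 * (p2 / 2) * p3) * (p4 * p5 * (p6 / 2)) = (p4 * p5 * p6) * (p1 * p2 * p3)" by simp
  have "A = a (j+2) * (fact (j+2) / 2) * fact k" unfolding A_def deriv_coeff_def k1 fA gA by simp
  moreover have "B = a (j+1) * fact (j+1) * fact (k+1)" unfolding B_def deriv_coeff_def k1 fB gB by simp
  moreover have "C = a j * fact j * (fact (k+2) / 2)" unfolding C_def deriv_coeff_def k1 fC gC by simp
  ultimately show ?thesis using le unfolding k1 by (metis alg)
qed


definition P :: "real \<Rightarrow> nat \<Rightarrow> real" where "P y n = (\<Prod>l = 0..<n. y - real l)"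

lemma P_Suc: "P y (Suc n) = P y n * (y - real n)" unfolding P_def by simp

lemma P_pos: "real n - 1 < z \<Longrightarrow> P z n > 0"
  unfolding P_def by (rule prod_pos) auto

lemma P_strict:
  assumes "n \<ge> 1" "real n - 1 \<le> y" "y < z" shows "P y n < P z n"
proof -
  obtain m where n: "n = Suc m" using assms(1) by (cases n) auto
  have "P y m \<le> P z m" unfolding P_def
    by (rule prod_mono) (use assms n in auto)
  moreover have "P z m > 0" using assms n by (intro P_pos) auto
  moreover have "0 \<le> y - m" "y - m < z - m" using assms n by auto
  ultimately have "P y m * (y - m) < P z m * (z - m)"
    by (meson le_less_trans mult_right_mono mult_strict_left_mono)
  thus ?thesis unfolding n P_Suc .
qed

lemma P_nat: "P (real n) n = fact n"
  unfolding P_def by (metis gbinomial_mult_fact' binomial_gbinomial binomial_n_n mult_1 of_nat_1)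

lemma P_fact: "k \<le> n \<Longrightarrow> P (real n) k * fact (n - k) = fact n"
proof -
  assume "k \<le> n"
  have "P (real n) k = real (n choose k) * fact k"
    unfolding P_def by (metis gbinomial_mult_fact' binomial_gbinomial)
  moreover have "fact k * fact (n-k) * (n choose k) = fact n"
    using binomial_fact_lemma[OF \<open>k \<le> n\<close>] .
  hence "real (fact k * fact (n-k) * (n choose k)) = real (fact n)" by simp
  ultimately show ?thesis by (simp add: algebra_simps)
qed

lemma P_pow:
  assumes "y \<ge> real d" "i < d" "n \<le> i"
  shows "P y n * (real d - real i)^n \<le> (y - real i)^n * P (real d) n"
  using assms(3)
proof (induction n)
  case 0 then show ?case by (simp add: P_def)
next
  case (Suc n)
  have IH: "P y n * (real d - real i)^n \<le> (y - real i)^n * P (real d) n" using Suc by simp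
  have "0 \<le> P y n" using P_pos[of n y] Suc assms by auto
  hence nn1: "0 \<le> P y n * (real d - real i)^n" using assms by simp
  have nn2: "0 \<le> (y - n) * (real d - real i)" using assms Suc by simp
  have key: "(y - n) * (real d - real i) \<le> (y - real i) * (real d - real n)"
  proof -
    have "(y - n) * (real d - real i) - (y - real i) * (real d - real n) = (real i - real n) * (real d - y)"
      by (simp add: algebra_simps)
    also have "\<dots> \<le> 0" using Suc assms by (intro mult_nonneg_nonpos) auto
    finally show ?thesis by simp
  qed
  have "P y (Suc n) * (real d - real i)^(Suc n) = (P y n * (real d - real i)^n) * ((y - n) * (real d - real i))"
    by (simp add: P_Suc algebra_simps)
  also have "\<dots> \<le> ((y - real i)^n * P (real d) n) * ((y - real i) * (real d - real n))"
    by (rule mult_mono[OF IH key nn1[THEN order_trans[OF _ IH]] nn2])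
  also have "\<dots> = (y - real i)^(Suc n) * P (real d) (Suc n)"
    by (simp add: P_Suc algebra_simps)
  finally show ?case .
qed

locale lcseq =
  fixes b :: "nat \<Rightarrow> real" and d :: nat
  assumes pos: "\<And>i. i \<le> d \<Longrightarrow> b i > 0"
    and lc: "\<And>j. j + 2 \<le> d \<Longrightarrow> b j * b (j+2) \<le> b (j+1)^2"
begin

lemma ratio: "k \<le> m \<Longrightarrow> m + 1 \<le> d \<Longrightarrow> b (m+1) * b k \<le> b m * b (k+1)"
proof (induction m rule: dec_induct)
  case base then show ?case by simp
next
  case (step m)
  have IH: "b (m+1) * b k \<le> b m * b (k+1)" using step by simp
  have bm: "b m > 0" using pos step by simp
  have l: "b m * b (m+2) \<le> b (m+1)^2" using lc[of m] step by simp
  have "b m * (b (Suc m + 1) * b k) = (b m * b (m+2)) * b k" by (simp add: algebra_simps)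
  also have "\<dots> \<le> b (m+1)^2 * b k" using l pos[of k] step by (intro mult_right_mono) auto
  also have "\<dots> = b (m+1) * (b (m+1) * b k)" by (simp add: power2_eq_square)
  also have "\<dots> \<le> b (m+1) * (b m * b (k+1))" using IH pos[of "m+1"] step by (intro mult_left_mono) auto
  also have "\<dots> = b m * (b (Suc m) * b (k+1))" by simp
  finally show ?case using bm by simp
qed

lemma ge0: assumes "b 0 \<le> b d" "i \<le> d" shows "b 0 \<le> b i"
proof (rule ccontr)
  assume neg: "\<not> b 0 \<le> b i"
  have "\<exists>k<i. b (k+1) < b k"
  proof (rule ccontr)
    assume "\<not> ?thesis"
    hence h: "\<forall>k<i. b k \<le> b (k+1)" by auto
    have "\<forall>n\<le>i. b 0 \<le> b n"
    proof (intro allI impI)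
      fix n assume "n \<le> i" thus "b 0 \<le> b n"
        by (induction n) (use h in \<open>auto intro: order_trans\<close>)
    qed
    thus False using neg by auto
  qed
  then obtain k where k: "k < i" "b (k+1) < b k" by auto
  have dec: "b (m+1) \<le> b m" if "k \<le> m" "m + 1 \<le> d" for m
  proof -
    have "b (m+1) * b k \<le> b m * b (k+1)" using ratio that by simp
    also have "\<dots> \<le> b m * b k" using k pos[of m] that by (intro mult_left_mono) auto
    finally show ?thesis using pos[of k] k assms by simp
  qed
  have "\<forall>n. i + n \<le> d \<longrightarrow> b (i+n) \<le> b i"
  proof
    fix n show "i + n \<le> d \<longrightarrow> b (i+n) \<le> b i"
    proof (induction n)
      case 0 then show ?case by simp
    next
      case (Suc n)
      show ?case
      proof
        assume a: "i + Suc n \<le> d"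
        have "b (i + n + 1) \<le> b (i + n)" using dec[of "i+n"] k a by simp
        thus "b (i + Suc n) \<le> b i" using Suc a by simp
      qed
    qed
  qed
  hence "b d \<le> b i" using assms(2) by (metis le_add_diff_inverse order_refl)
  thus False using neg assms(1) by simp
qed

lemma powineq: assumes "i + 1 \<le> d" shows "b (i+1)^i * b 0 \<le> b i ^ (i+1)"
proof -
  have "\<forall>k. k \<le> i \<longrightarrow> b (i+1)^k * b 0 \<le> b k * b i ^ k"
  proof (intro allI impI)
    fix k assume "k \<le> i" thus "b (i+1)^k * b 0 \<le> b k * b i ^ k"
    proof (induction k)
      case 0 then show ?case by simp
    next
      case (Suc k)
      have IH: "b (i+1)^k * b 0 \<le> b k * b i ^ k" using Suc by simp
      have r: "b (i+1) * b k \<le> b i * b (k+1)" using ratio[of k i] Suc assms by simp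
      have "b (i+1)^(Suc k) * b 0 = b (i+1) * (b (i+1)^k * b 0)" by simp
      also have "\<dots> \<le> b (i+1) * (b k * b i ^ k)" using IH pos[of "i+1"] assms by (intro mult_left_mono) auto
      also have "\<dots> = (b (i+1) * b k) * b i ^ k" by simp
      also have "\<dots> \<le> (b i * b (k+1)) * b i ^ k" using r pos[of i] assms by (intro mult_right_mono) auto
      also have "\<dots> = b (Suc k) * b i ^ Suc k" by simp
      finally show ?case .
    qed
  qed
  thus ?thesis by (metis order_refl power_Suc Suc_eq_plus1 mult.commute)
qed

end

theorem mainTheorem4:
  fixes d :: nat and x :: "nat \<Rightarrow> real"
  assumes "d \<ge> 2"
    and "\<forall>i\<in>{1..d}. x i \<ge> real i - 1"
    and "\<forall>i\<in>{1..d}. x i gchoose i > 0"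
    and "x d \<ge> real d"
    and "lorentzian2 d (\<lambda>i. if i = 0 then 1 else x i gchoose i)"
  shows "\<forall>i\<in>{1..<d}. x i \<ge> x (Suc i)"
proof -
  define a where "a = (\<lambda>i. if i = 0 then 1 else x i gchoose i)"
  define b where "b = (\<lambda>i. a i * fact i * fact (d - i) :: real)"
  have L: "lorentzian2 d a" using assms(5) unfolding a_def .
  have bx: "b i = P (x i) i * fact (d - i)" if "1 \<le> i" for i
    using that unfolding b_def a_def P_def by (simp add: gbinomial_mult_fact')
  have b0: "b 0 = fact d" unfolding b_def a_def by simp
  have bpos: "b i > 0" if "i \<le> d" for i
  proof (cases "i = 0")
    case True then show ?thesis using b0 by simp
  next
    case False
    hence "a i > 0" using assms(3) that unfolding a_def by auto
    thus ?thesis unfolding b_def by simp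
  qed
  interpret lcseq b d
  proof
    fix j assume "j + 2 \<le> d"
    from lc_from_lor[OF L this] show "b j * b (j+2) \<le> b (j+1)^2" unfolding b_def .
  qed (rule bpos)
  have "P (real d) d \<le> P (x d) d"
  proof (cases "x d = real d")
    case False
    thus ?thesis using P_strict[of d "real d" "x d"] assms(1,4) by simp
  qed simp
  hence bd: "b 0 \<le> b d" using bx[of d] assms(1) b0 P_nat[of d] by simp
  have xge: "x i \<ge> real d" if "1 \<le> i" "i \<le> d" for i
  proof (rule ccontr)
    assume "\<not> x i \<ge> real d"
    hence "P (x i) i < P (real d) i" using P_strict[of i "x i" "real d"] assms(2) that by simp
    hence "P (x i) i * fact (d - i) < P (real d) i * fact (d - i)" by simp
    hence "b i < b 0" using bx[OF that(1)] b0 P_fact[OF that(2)] by simp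
    thus False using ge0[OF bd that(2)] by simp
  qed
  show ?thesis
  proof
    fix i assume i: "i \<in> {1..<d}"
    show "x i \<ge> x (Suc i)"
    proof (rule ccontr)
      assume "\<not> ?thesis"
      hence lt: "x i < x (Suc i)" by simp
      define y where "y = x i"
      have yd: "y \<ge> real d" using xge i unfolding y_def by auto
      define Q where "Q = P y i"
      define F where "F = (fact (d - Suc i) :: real)"
      define c where "c = y - real i"
      define e where "e = real d - real i"
      define Pd where "Pd = P (real d) i"
      have Fp: "F > 0" unfolding F_def by simp
      have Qp: "Q > 0" unfolding Q_def using yd i by (intro P_pos) auto
      have cp: "c > 0" unfolding c_def using yd i by auto
      have ep: "e > 0" unfolding e_def using i by auto
      have Pdp: "Pd > 0" unfolding Pd_def using i by (intro P_pos) auto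
      have fe: "(fact (d - i) :: real) = e * F"
      proof -
        have "d - i = Suc (d - Suc i)" using i by auto
        thus ?thesis unfolding F_def e_def using i by (metis fact_Suc of_nat_Suc of_nat_diff less_imp_le atLeastLessThan_iff)
      qed
      have bi: "b i = Q * e * F" using bx[of i] i fe unfolding Q_def y_def by auto
      have b00: "b 0 = Pd * e * F" using b0 P_fact[of i d] i fe unfolding Pd_def by auto
      have "P y (Suc i) < P (x (Suc i)) (Suc i)"
        using P_strict[of "Suc i" y "x (Suc i)"] yd i lt unfolding y_def by auto
      hence "Q * c * F < b (Suc i)"
        using bx[of "Suc i"] Fp unfolding Q_def c_def F_def by (simp add: P_Suc)
      hence s1: "(Q * c * F)^i < b (Suc i)^i"
        using Qp cp Fp i by (intro power_strict_mono) auto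
      have pw: "Q * e^i \<le> c^i * Pd"
        using P_pow[of d y i i] yd i unfolding Q_def c_def e_def Pd_def by auto
      have "b i ^ (i+1) = (Q^i * F^i * e * F) * (Q * e^i)"
        unfolding bi by (simp add: power_mult_distrib algebra_simps)
      also have "\<dots> \<le> (Q^i * F^i * e * F) * (c^i * Pd)"
        using pw Qp Fp ep by (intro mult_left_mono) auto
      also have "\<dots> = (Q * c * F)^i * b 0"
        unfolding b00 by (simp add: power_mult_distrib algebra_simps)
      also have "\<dots> < b (Suc i)^i * b 0"
        using s1 bpos[of 0] by (intro mult_strict_right_mono) auto
      also have "\<dots> \<le> b i ^ (i+1)" using powineq[of i] i by simp
      finally show False by simp
    qed
  qed
qed

end
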